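(* Let $m\ge2$ and $n\ge m$. For every $\epsilon$ with $0<\epsilon\le 1/2$, there is no proportional mechanism $(A,p)$ for the job scheduling problem over the set $\mathcal{C}$ of general instances with $m$ machines and $n$ jobs such that $A$ gives a $(3/2-\epsilon)$-approximation to the optimal makespan.
   Context: Notation: $[k]=\{1,\dots,k\}$. There are $m$ machines $[m]$ and $n$ jobs $[n]$. An instance is a matrix $c\in\mathbb{R}_{\ge0}^{m\times n}$; for $S\subseteq[n]$, $c_i(S)=\sum_{j\in S}c_{i,j}$. The set of general instances is $\mathcal{C}=\mathbb{R}_{\ge0}^{m\times n}$. An allocation is a tuple $(X_1,\dots,X_m)$ of pairwise disjoint subsets of $[n]$ whose union is $[n]$. A mechanism $(A,p)$ over a set of instances $\mathcal{I}$ assigns to each $c\in\mathcal{I}$ an allocation $A(c)$ and payments $p(c)\in\mathbb{R}^m$ (written $A_i,p_i$). The mechanism is proportional if for every $c\in\mathcal{I}$ and $i\in[m]$: $c_i(A_i)-p_i\le \frac1m\sum_{j\in[m]}(c_i(A_j)-p_j)$. $\mathrm{OPT}(c)=\min_X\max_{i\in[m]}c_i(X_i)$ over all allocations $X$. An allocation function $A$ gives a $\beta$-approximation to the optimal makespan if $\max_{i}c_i(A(c)_i)\le\beta\,\mathrm{OPT}(c)$ for all $c\in\mathcal{I}$. *)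

theory Defs
  imports Complex_Main
begin

text \<open>An instance is a cost matrix
  c :: nat => nat => real, c i j = cost of job j on machine i.
  The set C of general instances: nonnegative entries on [m]x[n]; entries outside
  the index range are fixed to 0 so that instances correspond one-to-one to matrices.\<close>

definition instances :: "nat \<Rightarrow> nat \<Rightarrow> (nat \<Rightarrow> nat \<Rightarrow> real) set" where
  "instances m n = {c. (\<forall>i<m. \<forall>j<n. 0 \<le> c i j) \<and>
                       (\<forall>i j. (i \<ge> m \<or> j \<ge> n) \<longrightarrow> c i j = 0)}"

definition cost :: "(nat \<Rightarrow> nat \<Rightarrow> real) \<Rightarrow> nat \<Rightarrow> nat set \<Rightarrow> real" where
  "cost c i S = (\<Sum>j\<in>S. c i j)"

definition is_allocation :: "nat \<Rightarrow> nat \<Rightarrow> (nat \<Rightarrow> nat set) \<Rightarrow> bool" where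
  "is_allocation m n X \<longleftrightarrow>
     (\<forall>i<m. \<forall>k<m. i \<noteq> k \<longrightarrow> X i \<inter> X k = {}) \<and> (\<Union>i<m. X i) = {0..<n}"

definition makespan :: "nat \<Rightarrow> (nat \<Rightarrow> nat \<Rightarrow> real) \<Rightarrow> (nat \<Rightarrow> nat set) \<Rightarrow> real" where
  "makespan m c X = Max ((\<lambda>i. cost c i (X i)) ` {0..<m})"

definition OPT :: "nat \<Rightarrow> nat \<Rightarrow> (nat \<Rightarrow> nat \<Rightarrow> real) \<Rightarrow> real" where
  "OPT m n c = Inf {makespan m c X | X. is_allocation m n X}"

text \<open>A mechanism (A,p) over the instance set I: A c is an allocation, p c i the payment
  of machine i. Proportionality: c_i(A_i) - p_i <= (1/m) * sum_j (c_i(A_j) - p_j).\<close>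
definition proportional ::
  "nat \<Rightarrow> (nat \<Rightarrow> nat \<Rightarrow> real) set \<Rightarrow> ((nat \<Rightarrow> nat \<Rightarrow> real) \<Rightarrow> nat \<Rightarrow> nat set)
     \<Rightarrow> ((nat \<Rightarrow> nat \<Rightarrow> real) \<Rightarrow> nat \<Rightarrow> real) \<Rightarrow> bool" where
  "proportional m I A p \<longleftrightarrow>
     (\<forall>c\<in>I. \<forall>i<m. cost c i (A c i) - p c i
        \<le> (1 / real m) * (\<Sum>j<m. cost c i (A c j) - p c j))"

definition approx :: "nat \<Rightarrow> nat \<Rightarrow> (nat \<Rightarrow> nat \<Rightarrow> real) set \<Rightarrow>
     ((nat \<Rightarrow> nat \<Rightarrow> real) \<Rightarrow> nat \<Rightarrow> nat set) \<Rightarrow> real \<Rightarrow> bool" where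
  "approx m n I A \<beta> \<longleftrightarrow> (\<forall>c\<in>I. makespan m c (A c) \<le> \<beta> * OPT m n c)"

end

theory Submission
  imports Defs
begin

lemma cost_nonneg:
  assumes "\<forall>l. 0 \<le> c i l"
  shows "0 \<le> cost c i S"
  unfolding cost_def using assms by (simp add: sum_nonneg)

lemma cost_ge1:
  assumes "\<forall>l. 0 \<le> c i l" "finite S" "p \<in> S"
  shows "c i p \<le> cost c i S"
  unfolding cost_def using assms by (intro member_le_sum) auto

lemma cost_ge2:
  assumes "\<forall>l. 0 \<le> c i l" "finite S" "p \<in> S" "q \<in> S" "p \<noteq> q"
  shows "c i p + c i q \<le> cost c i S"
proof -
  have "c i p + c i q = sum (c i) {p, q}" using assms by simp
  also have "\<dots> \<le> sum (c i) S"
    using assms by (intro sum_mono2) auto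
  finally show ?thesis unfolding cost_def .
qed

lemma alloc_finite:
  assumes "is_allocation m n X" "k < m"
  shows "finite (X k)"
proof -
  have "X k \<subseteq> (\<Union>i<m. X i)" using assms(2) by blast
  then have "X k \<subseteq> {0..<n}" using assms(1) unfolding is_allocation_def by simp
  then show ?thesis using finite_subset by blast
qed

lemma alloc_cover:
  assumes "is_allocation m n X" "j < n"
  shows "\<exists>k<m. j \<in> X k"
proof -
  have "j \<in> (\<Union>i<m. X i)" using assms unfolding is_allocation_def by simp
  then show ?thesis by auto
qed

lemma cost_union:
  assumes "is_allocation m n X"
  shows "(\<Sum>j<m. cost c i (X j)) = (\<Sum>l<n. c i l)"
proof -
  have "(\<Sum>j<m. cost c i (X j)) = sum (c i) (\<Union>(X ` {..<m}))"
    unfolding cost_def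
    using assms alloc_finite[OF assms]
    by (subst sum.UNION_disjoint) (auto simp: is_allocation_def)
  also have "\<Union>(X ` {..<m}) = {..<n}"
    using assms unfolding is_allocation_def by auto
  finally show ?thesis .
qed

lemma prop_sum:
  assumes m: "m > 0" and al: "is_allocation m n X"
    and pr: "\<forall>i<m. cost c i (X i) - p i \<le> (1 / real m) * (\<Sum>j<m. cost c i (X j) - p j)"
  shows "(\<Sum>i<m. cost c i (X i)) \<le> (1 / real m) * (\<Sum>i<m. \<Sum>l<n. c i l)"
proof -
  define P where "P = (\<Sum>j<m. p j)"
  have "(\<Sum>i<m. cost c i (X i) - p i) \<le> (\<Sum>i<m. (1 / real m) * (\<Sum>j<m. cost c i (X j) - p j))"
    using pr by (intro sum_mono) auto
  also have "\<dots> = (\<Sum>i<m. (1 / real m) * ((\<Sum>l<n. c i l) - P))"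
    using cost_union[OF al] by (simp add: sum_subtractf P_def)
  also have "\<dots> = (1 / real m) * (\<Sum>i<m. \<Sum>l<n. c i l) - P"
    using m by (simp add: sum_subtractf sum_divide_distrib right_diff_distrib)
  finally show ?thesis by (simp add: sum_subtractf P_def)
qed

theorem theorem2:
  fixes m n :: nat and \<epsilon> :: real
  assumes "m \<ge> 2" and "n \<ge> m" and "0 < \<epsilon>" and "\<epsilon> \<le> 1/2"
  shows "\<not> (\<exists>A p. (\<forall>c\<in>instances m n. is_allocation m n (A c)) \<and>
                   proportional m (instances m n) A p \<and>
                   approx m n (instances m n) A (3/2 - \<epsilon>))"
proof
  assume "\<exists>A p. (\<forall>c\<in>instances m n. is_allocation m n (A c)) \<and>
                   proportional m (instances m n) A p \<and>
                   approx m n (instances m n) A (3/2 - \<epsilon>)"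
  then obtain A p where hA: "\<forall>c\<in>instances m n. is_allocation m n (A c)"
    and hp: "proportional m (instances m n) A p"
    and hap: "approx m n (instances m n) A (3/2 - \<epsilon>)" by blast
  define a :: real where "a = 1/2 - \<epsilon>/2"
  define b :: real where "b = 3/2 - \<epsilon>/2"
  define \<beta> :: real where "\<beta> = 3/2 - \<epsilon>"
  have a0: "0 \<le> a" and bb: "\<beta> < b" and ab1: "1 + a = b" and ab2: "a + b < 2" and b0: "0 \<le> b"
    and beta0: "0 < \<beta>"
    using assms by (auto simp: a_def b_def \<beta>_def)
  define c :: "nat \<Rightarrow> nat \<Rightarrow> real" where
    "c = (\<lambda>i j. if i < m \<and> j < m then (if i = j then 1 else if j = 0 \<or> (i \<noteq> 0 \<and> i < j) then b else a) else 0)"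
  have cnn: "\<forall>l. 0 \<le> c i l" for i using a0 b0 by (simp add: c_def)
  have cinst: "c \<in> instances m n"
    using a0 b0 assms(2) by (auto simp: instances_def c_def)
  define X where "X = A c"
  have al: "is_allocation m n X" using hA cinst X_def by blast
  have m0: "m > 0" using assms by simp
  define X0 :: "nat \<Rightarrow> nat set" where "X0 = (\<lambda>i. if i = 0 then insert 0 {m..<n} else {i})"
  have al0: "is_allocation m n X0"
  proof -
    have "(\<Union>i<m. X0 i) = {0..<n}"
    proof
      show "(\<Union>i<m. X0 i) \<subseteq> {0..<n}" using assms(2) m0 by (auto simp: X0_def split: if_splits)
      show "{0..<n} \<subseteq> (\<Union>i<m. X0 i)"
      proof
        fix j assume "j \<in> {0..<n}"
        show "j \<in> (\<Union>i<m. X0 i)"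
        proof (cases "j < m")
          case True then show ?thesis by (intro UN_I[of j]) (auto simp: X0_def)
        next
          case False then show ?thesis using \<open>j \<in> {0..<n}\<close> m0
            by (intro UN_I[of 0]) (auto simp: X0_def)
        qed
      qed
    qed
    moreover have "\<forall>i<m. \<forall>k<m. i \<noteq> k \<longrightarrow> X0 i \<inter> X0 k = {}"
      by (auto simp: X0_def)
    ultimately show ?thesis unfolding is_allocation_def by blast
  qed
  have cX0: "cost c i (X0 i) = 1" if "i < m" for i
  proof (cases "i = 0")
    case True
    have "cost c i (X0 i) = c 0 0 + sum (c 0) {m..<n}"
      using True m0 by (simp add: cost_def X0_def)
    also have "sum (c 0) {m..<n} = 0" by (intro sum.neutral) (auto simp: c_def)
    finally show ?thesis using m0 by (simp add: c_def)
  next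
    case False then show ?thesis using that by (simp add: cost_def X0_def c_def)
  qed
  have "makespan m c X0 = 1"
  proof -
    have "(\<lambda>i. cost c i (X0 i)) ` {0..<m} = {1}" using cX0 m0 by force
    then show ?thesis unfolding makespan_def by simp
  qed
  moreover have "OPT m n c \<le> makespan m c X0"
    unfolding OPT_def
  proof (rule cInf_lower)
    show "makespan m c X0 \<in> {makespan m c X |X. is_allocation m n X}" using al0 by blast
    show "bdd_below {makespan m c X |X. is_allocation m n X}"
    proof (rule bdd_belowI[of _ 0])
      fix x assume "x \<in> {makespan m c X |X. is_allocation m n X}"
      then obtain Y where x: "x = makespan m c Y" by blast
      have "0 \<le> cost c 0 (Y 0)" using cost_nonneg cnn by blast
      also have "cost c 0 (Y 0) \<le> x" unfolding x makespan_def using m0 by (intro Max_ge) auto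
      finally show "0 \<le> x" .
    qed
  qed
  ultimately have opt1: "OPT m n c \<le> 1" by simp
  have "makespan m c X \<le> \<beta> * OPT m n c" using hap cinst X_def by (simp add: approx_def \<beta>_def)
  also have "\<dots> \<le> \<beta>" using opt1 beta0 by (simp add: mult_left_le)
  finally have msX: "makespan m c X \<le> \<beta>" .
  have loadX: "cost c k (X k) \<le> \<beta>" if "k < m" for k
  proof -
    have "cost c k (X k) \<le> makespan m c X" unfolding makespan_def using that by (intro Max_ge) auto
    then show ?thesis using msX by simp
  qed
  have fin: "finite (X k)" if "k < m" for k using alloc_finite[OF al that] .
  have X00: "0 \<in> X 0"
  proof -
    obtain k where k: "k < m" "0 \<in> X k" using alloc_cover[OF al] m0 assms(2) by fastforce
    show ?thesis
    proof (rule ccontr)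
      assume "0 \<notin> X 0"
      then have "k \<noteq> 0" using k by (cases k) auto
      then have "c k 0 = b" using k m0 by (simp add: c_def)
      moreover have "c k 0 \<le> cost c k (X k)" using cost_ge1[OF cnn fin[OF k(1)] k(2)] .
      ultimately show False using loadX[OF k(1)] bb by simp
    qed
  qed
  have diag: "\<forall>i<m. i \<in> X i"
  proof (rule ccontr)
    assume "\<not> (\<forall>i<m. i \<in> X i)"
    define J where "J = {j. j < m \<and> j \<notin> X j}"
    have Jne: "J \<noteq> {}" using \<open>\<not> (\<forall>i<m. i \<in> X i)\<close> by (auto simp: J_def)
    have Jfin: "finite J" by (auto simp: J_def)
    define j where "j = Max J"
    have jJ: "j \<in> J" using Jne Jfin j_def by simp
    have jmax: "\<And>k. k \<in> J \<Longrightarrow> k \<le> j" using Jfin j_def by simp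
    have jm: "j < m" and jX: "j \<notin> X j" using jJ by (auto simp: J_def)
    have j0: "j \<noteq> 0" using jX X00 by (cases j) auto
    obtain k where k: "k < m" "j \<in> X k" using alloc_cover[OF al, of j] jm assms(2) by auto
    have kj: "k \<noteq> j" using k jX by auto
    have ld: "cost c k (X k) \<le> \<beta>" using loadX[OF k(1)] .
    have c1: "c k j \<le> cost c k (X k)" using cost_ge1[OF cnn fin[OF k(1)] k(2)] .
    show False
    proof (cases "k = 0")
      case True
      have "c k 0 + c k j \<le> cost c k (X k)"
        using cost_ge2[of c k "X k" 0 j] cnn[of k] fin[OF k(1)] X00 k(2) True j0 by simp
      then show False using True ld bb ab1 jm m0 j0 by (simp add: c_def)
    next
      case False
      show False
      proof (cases "k < j")
        case True
        then have "c k j = b" using False k jm by (simp add: c_def)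
        then show False using c1 ld bb by simp
      next
        case nl: False
        then have "j < k" using kj by simp
        then have "k \<notin> J" using jmax by force
        then have "k \<in> X k" using k by (auto simp: J_def)
        have "c k k + c k j \<le> cost c k (X k)"
          using cost_ge2[of c k "X k" k j] cnn[of k] fin[OF k(1)] \<open>k \<in> X k\<close> k(2) kj by simp
        moreover have "c k k = 1" "c k j = a" using k jm \<open>j < k\<close> False j0 by (auto simp: c_def)
        ultimately show False using ld bb ab1 by simp
      qed
    qed
  qed
  have lhs: "real m \<le> (\<Sum>i<m. cost c i (X i))"
  proof -
    have "(\<Sum>i<m. cost c i (X i)) \<ge> (\<Sum>i<m. c i i)"
      using diag fin by (intro sum_mono cost_ge1[OF cnn]) auto
    moreover have "(\<Sum>i<m. c i i) = real m" by (simp add: c_def)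
    ultimately show ?thesis by simp
  qed
  have hprop: "\<forall>i<m. cost c i (X i) - p c i \<le> (1 / real m) * (\<Sum>j<m. cost c i (X j) - p c j)"
    using hp cinst X_def by (simp add: proportional_def)
  have rhs: "(\<Sum>i<m. cost c i (X i)) \<le> (1 / real m) * (\<Sum>i<m. \<Sum>l<n. c i l)"
    using prop_sum[OF m0 al hprop] .
  have red: "(\<Sum>l<n. c i l) = (\<Sum>l<m. c i l)" for i
    using assms(2) by (intro sum.mono_neutral_right) (auto simp: c_def)
  define S where "S = (\<Sum>i<m. \<Sum>l<m. c i l)"
  have "2 * S = (\<Sum>i<m. \<Sum>l<m. c i l + c l i)"
    unfolding S_def using sum.swap[of "\<lambda>i l. c l i" "{..<m}" "{..<m}"]
    by (simp add: sum.distrib)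
  also have "\<dots> < (\<Sum>i<m. \<Sum>l<m. (2::real))"
  proof (rule sum_strict_mono_ex1)
    have pair: "c i l + c l i \<le> 2" if "i < m" "l < m" for i l
      using that ab2 by (auto simp: c_def)
    show "\<forall>x\<in>{..<m}. (\<Sum>l<m. c x l + c l x) \<le> (\<Sum>l<m. 2)"
    proof
      fix x assume "x \<in> {..<m}"
      then show "(\<Sum>l<m. c x l + c l x) \<le> (\<Sum>l<m. 2)"
        using pair by (intro sum_mono) auto
    qed
    have "(\<Sum>l<m. c 0 l + c l 0) < (\<Sum>l<m. 2)"
    proof (rule sum_strict_mono_ex1)
      show "\<forall>x\<in>{..<m}. c 0 x + c x 0 \<le> 2" using pair m0 by auto
      have "c 0 1 + c 1 0 < 2" using assms(1) ab2 by (simp add: c_def)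
      then show "\<exists>a\<in>{..<m}. c 0 a + c a 0 < 2" using assms(1) by (intro bexI[of _ 1]) auto
    qed simp
    then show "\<exists>a\<in>{..<m}. (\<Sum>l<m. c a l + c l a) < (\<Sum>l<m. 2)" using m0 by blast
  qed simp
  also have "\<dots> = 2 * real m * real m" by simp
  finally have "S < real m * real m" by simp
  then have "(1 / real m) * S < real m" using m0 by (simp add: field_simps)
  moreover have "(\<Sum>i<m. \<Sum>l<n. c i l) = S" unfolding S_def using red by simp
  ultimately show False using lhs rhs by simp
qed

end
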